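(* Let $\alpha>0$, $A\ge0$, $B>0$, $t>0$, and let $P_n(x,t)=x^n+\mathsf{p}_1(n,t)x^{n-1}+\cdots$ be the monic polynomials orthogonal on $[0,\infty)$ w.r.t. $w(x,t)=x^\alpha e^{-x}(A+B\theta(x-t))$, with norms $h_n(t)$, recurrence $zP_n=P_{n+1}+\alpha_nP_n+\beta_nP_{n-1}$, $\beta_n=h_n/h_{n-1}$, and $\mathsf{p}_1(0,t)=0$. Let $R_n(t)=Bt^\alpha e^{-t}\{P_n(t,t)\}^2/h_n(t)$ and $r_n(t)=Bt^\alpha e^{-t}P_n(t,t)P_{n-1}(t,t)/h_{n-1}(t)$. Then for $n\ge1$ $$t\sum_{j=0}^{n-1}R_j=-t\,r_n-n(n+\alpha)+\beta_n,\qquad \sum_{j=0}^{n-1}\alpha_j=-\mathsf{p}_1(n,t)=\beta_n-t\,r_n.$$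
   Context: $\theta$ is the Heaviside function ($1$ for $x>0$, $0$ otherwise); $P_n(t,t)$ is $P_n(x,t)$ at $x=t$. *)

theory Defs
  imports "HOL-Analysis.Analysis" "HOL-Computational_Algebra.Polynomial"
begin

definition heaviside :: "real \<Rightarrow> real" where
  "heaviside x = (if x > 0 then 1 else 0)"

definition wgt :: "real \<Rightarrow> real \<Rightarrow> real \<Rightarrow> real \<Rightarrow> real \<Rightarrow> real" where
  "wgt alpha A B t x = x powr alpha * exp (- x) * (A + B * heaviside (x - t))"

definition ip :: "real \<Rightarrow> real \<Rightarrow> real \<Rightarrow> real \<Rightarrow> real poly \<Rightarrow> real poly \<Rightarrow> real" where
  "ip alpha A B t p q = (LINT x:{0..}|lborel. poly p x * poly q x * wgt alpha A B t x)"

definition monic_OPS :: "real \<Rightarrow> real \<Rightarrow> real \<Rightarrow> real \<Rightarrow> (nat \<Rightarrow> real poly) \<Rightarrow> bool" where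
  "monic_OPS alpha A B t P \<longleftrightarrow>
     (\<forall>n. degree (P n) = n \<and> lead_coeff (P n) = 1) \<and>
     (\<forall>n m. m < n \<longrightarrow> ip alpha A B t (P n) (P m) = 0)"

end

theory Submission
  imports Defs "HOL-Real_Asymp.Real_Asymp"
begin

definition g :: "real \<Rightarrow> real \<Rightarrow> real" where "g s x = x powr s * exp (- x)"

lemma g_fun: "g r = (\<lambda>x. x powr r * exp (- x))" by (simp add: fun_eq_iff g_def)

lemma g_int0:
  assumes "s > -1"
  shows "set_integrable lborel {0..} (g s)"
proof -
  have "((\<lambda>t. t powr s / exp t) has_integral Gamma (s+1)) {0..}"
    using Gamma_integral_real[of "s+1"] assms by simp
  moreover have "g s = (\<lambda>t. t powr s / exp t)"
    by (auto simp: g_def exp_minus field_simps fun_eq_iff)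
  ultimately have "(g s) integrable_on {0..}"
    by (auto simp: integrable_on_def)
  hence "(g s) absolutely_integrable_on {0..}"
    by (rule nonnegative_absolutely_integrable_1) (simp add: g_def)
  hence "integrable lebesgue (\<lambda>x. indicator {0..} x *\<^sub>R g s x)"
    by (simp add: set_integrable_def)
  moreover have "(\<lambda>x. indicator {0..} x *\<^sub>R g s x) \<in> borel_measurable lborel"
    unfolding g_def by measurable
  ultimately show ?thesis
    unfolding set_integrable_def using integrable_completion by blast
qed

lemma lim_top: fixes s :: real assumes "s > 0" shows "((\<lambda>x. x powr s * exp (- x)) \<longlongrightarrow> 0) at_top"
proof (rule tendsto_sandwich[of "\<lambda>_. 0" _ _ "\<lambda>x. x ^ nat \<lceil>s\<rceil> / exp x"])
  show "\<forall>\<^sub>F x in at_top. 0 \<le> x powr s * exp (- x)" by simp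
  have "x powr s * exp (- x) \<le> x ^ nat \<lceil>s\<rceil> / exp x" if "x \<ge> 1" for x
  proof -
    have "x powr s \<le> x powr (real (nat \<lceil>s\<rceil>))"
      using that assms by (intro powr_mono) auto
    also have "\<dots> = x ^ nat \<lceil>s\<rceil>" using that by (simp add: powr_realpow)
    finally show ?thesis by (simp add: exp_minus divide_inverse)
  qed
  thus "\<forall>\<^sub>F x in at_top. x powr s * exp (- x) \<le> x ^ nat \<lceil>s\<rceil> / exp x"
    by (auto simp: eventually_at_top_linorder)
  show "((\<lambda>x::real. x ^ nat \<lceil>s\<rceil> / exp x) \<longlongrightarrow> 0) at_top" using tendsto_power_div_exp_0[of "nat \<lceil>s\<rceil>"] by simp
qed auto

lemma lim_0: "s > 0 \<Longrightarrow> ((\<lambda>x::real. x powr s * exp (- x)) \<longlongrightarrow> 0) (at_right 0)"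
  by real_asymp


lemma g_intc:
  assumes "s > -1" "c \<ge> 0"
  shows "set_integrable lborel {c<..} (g s)"
  by (rule set_integrable_subset[OF g_int0[OF assms(1)]]) (use assms in auto)

lemma J_rec:
  assumes s: "s > 0" and c: "c \<ge> 0"
  shows "(LINT x:{c<..}|lborel. g (s+1) x) = (s+1) * (LINT x:{c<..}|lborel. g s x) + g (s+1) c"
proof -
  define f where "f x = (s+1) * g s x - g (s+1) x" for x
  have i1: "set_integrable lborel {c<..} (g s)" using g_intc[of s c] s c by auto
  have i2: "set_integrable lborel {c<..} (g (s+1))" using g_intc[of "s+1" c] s c by auto
  have fi: "set_integrable lborel (einterval (ereal c) \<infinity>) f"
    unfolding f_def einterval_eq_Ici using i1 i2 by (intro set_integral_diff) auto
  have "(LBINT x=ereal c..\<infinity>. f x) = 0 - g (s+1) c"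
  proof (rule interval_integral_FTC_integrable[OF _ _ _ fi])
    show "ereal c < \<infinity>" by simp
    fix x assume "ereal c < ereal x" "ereal x < \<infinity>"
    hence x: "x > 0" using c by auto
    have "((\<lambda>x. x powr (s+1) * exp (- x)) has_real_derivative
        ((s+1) * x powr (s + 1 - 1) * exp (-x) + x powr (s+1) * (exp (- x) * (-1)))) (at x)"
      by (intro derivative_eq_intros has_real_derivative_powr x) auto
    moreover have "g (s+1) = (\<lambda>x. x powr (s+1) * exp (- x))" by (simp add: fun_eq_iff g_def)
    ultimately show "(g (s+1) has_vector_derivative f x) (at x)"
      by (simp add: g_def f_def has_real_derivative_iff_has_vector_derivative[symmetric] algebra_simps)
    show "isCont f x" unfolding f_def g_def using x by (intro continuous_intros) auto
  next
    show "((g (s+1) \<circ> real_of_ereal) \<longlongrightarrow> g (s+1) c) (at_right (ereal c))"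
      unfolding ereal_tendsto_simps1
    proof (cases "c = 0")
      case True
      have "((\<lambda>x::real. x powr (s+1) * exp (- x)) \<longlongrightarrow> 0) (at_right 0)"
        using s by real_asymp
      thus "(g (s + 1) \<longlongrightarrow> g (s + 1) c) (at_right c)" using True by (simp add: g_fun)
    next
      case False
      hence "c > 0" using c by auto
      hence "isCont (g (s+1)) c" unfolding g_def by (intro continuous_intros) auto
      thus "(g (s + 1) \<longlongrightarrow> g (s + 1) c) (at_right c)"
        by (simp add: isCont_def filterlim_at_split)
    qed
    show "((g (s+1) \<circ> real_of_ereal) \<longlongrightarrow> 0) (at_left \<infinity>)"
      unfolding ereal_tendsto_simps1 g_fun using lim_top[of "s+1"] s by simp
  qed
  moreover have "(LBINT x=ereal c..\<infinity>. f x) = (s+1) * (LINT x:{c<..}|lborel. g s x) - (LINT x:{c<..}|lborel. g (s+1) x)"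
    unfolding interval_lebesgue_integral_def f_def using i1 i2 by simp
  ultimately show ?thesis by simp
qed


definition Jc :: "real \<Rightarrow> real \<Rightarrow> real" where
  "Jc c s = (LINT x:{c<..}|lborel. g s x)"

definition mom :: "real \<Rightarrow> real \<Rightarrow> real \<Rightarrow> real \<Rightarrow> nat \<Rightarrow> real" where
  "mom alpha A B t k = (LINT x:{0..}|lborel. x ^ k * wgt alpha A B t x)"

lemma mom_pointwise:
  assumes "alpha > 0" "t > 0"
  shows "indicator {0..} x *\<^sub>R (x ^ k * wgt alpha A B t x) =
    A * (indicator {0<..} x *\<^sub>R g (alpha + k) x) + B * (indicator {t<..} x *\<^sub>R g (alpha + k) x)"
proof (cases "x > 0")
  case True
  have "x ^ k * x powr alpha = x powr (alpha + k)"
    using True by (simp add: powr_add powr_realpow)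
  hence "x ^ k * wgt alpha A B t x = g (alpha + k) x * (A + B * heaviside (x - t))"
    by (simp add: wgt_def g_def mult.assoc[symmetric])
  thus ?thesis using True by (auto simp: heaviside_def indicator_def algebra_simps)
next
  case False
  thus ?thesis using assms by (cases "x = 0") (auto simp: indicator_def g_def wgt_def)
qed

lemma mom_int_eq:
  assumes "alpha > 0" "t > 0"
  shows "set_integrable lborel {0..} (\<lambda>x. x ^ k * wgt alpha A B t x)"
    "mom alpha A B t k = A * Jc 0 (alpha + k) + B * Jc t (alpha + k)"
proof -
  have i0: "integrable lborel (\<lambda>x. indicator {0<..} x *\<^sub>R g (alpha + k) x)"
    using g_intc[of "alpha + k" 0] assms unfolding set_integrable_def by auto
  have it: "integrable lborel (\<lambda>x. indicator {t<..} x *\<^sub>R g (alpha + k) x)"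
    using g_intc[of "alpha + k" t] assms unfolding set_integrable_def by auto
  have eq: "(\<lambda>x. indicator {0..} x *\<^sub>R (x ^ k * wgt alpha A B t x)) =
    (\<lambda>x. A * (indicator {0<..} x *\<^sub>R g (alpha + k) x) + B * (indicator {t<..} x *\<^sub>R g (alpha + k) x))"
    using mom_pointwise[OF assms] by auto
  show "set_integrable lborel {0..} (\<lambda>x. x ^ k * wgt alpha A B t x)"
    unfolding set_integrable_def eq using i0 it by auto
  show "mom alpha A B t k = A * Jc 0 (alpha + k) + B * Jc t (alpha + k)"
    unfolding mom_def Jc_def set_lebesgue_integral_def eq using i0 it by simp
qed

lemma mom_rec:
  assumes "alpha > 0" "t > 0"
  shows "mom alpha A B t (Suc k) = (alpha + k + 1) * mom alpha A B t k + B * t powr (alpha + 1) * exp (- t) * t ^ k"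
proof -
  have a: "alpha + real (Suc k) = (alpha + k) + 1" by simp
  have p: "alpha + real k > 0" using assms by simp
  have "t powr (alpha + k + 1) = t powr (alpha + 1) * t ^ k"
    using assms by (simp add: powr_add powr_realpow[symmetric] algebra_simps)
  thus ?thesis
    unfolding mom_int_eq(2)[OF assms] a Jc_def J_rec[OF p order_refl] J_rec[OF p less_imp_le[OF assms(2)]]
    by (simp add: g_def algebra_simps)
qed


lemma coeff_xpd: "coeff (pCons 0 (pderiv p)) i = of_nat i * coeff p i"
  by (cases i) (auto simp: coeff_pderiv)

definition Lf :: "real \<Rightarrow> real \<Rightarrow> real \<Rightarrow> real \<Rightarrow> real poly \<Rightarrow> real" where
  "Lf alpha A B t p = (LINT x:{0..}|lborel. poly p x * wgt alpha A B t x)"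

lemma Lf_int:
  assumes "alpha > 0" "t > 0"
  shows "set_integrable lborel {0..} (\<lambda>x. poly p x * wgt alpha A B t x)"
proof -
  have eq: "(\<lambda>x. indicator {0..} x *\<^sub>R (poly p x * wgt alpha A B t x)) =
     (\<lambda>x. \<Sum>i\<le>degree p. coeff p i *\<^sub>R (indicator {0..} x *\<^sub>R (x ^ i * wgt alpha A B t x)))"
    by (auto simp: poly_altdef sum_distrib_left sum_distrib_right algebra_simps)
  have iI: "integrable lborel (\<lambda>x. indicator {0..} x *\<^sub>R (x ^ i * wgt alpha A B t x))" for i
    using mom_int_eq(1)[OF assms] unfolding set_integrable_def by blast
  show ?thesis unfolding set_integrable_def eq
    by (intro Bochner_Integration.integrable_sum integrable_scaleR_right iI)
qed

lemma Lf_add: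
  assumes "alpha > 0" "t > 0"
  shows "Lf alpha A B t (p + q) = Lf alpha A B t p + Lf alpha A B t q"
  unfolding Lf_def using Lf_int[OF assms, of p A B] Lf_int[OF assms, of q A B]
  by (simp add: distrib_right)

lemma Lf_smult:
  shows "Lf alpha A B t (smult c p) = c * Lf alpha A B t p"
  unfolding Lf_def by (simp add: mult.assoc)

lemma Lf_monom:
  shows "Lf alpha A B t (monom c k) = c * mom alpha A B t k"
  unfolding Lf_def mom_def by (simp add: poly_monom mult.assoc)

lemma Lf_pCons_add:
  assumes "alpha > 0" "t > 0"
  shows "Lf alpha A B t (pCons 0 (p + q)) = Lf alpha A B t (pCons 0 p) + Lf alpha A B t (pCons 0 q)"
  using Lf_add[OF assms, of A B "pCons 0 p" "pCons 0 q"] by simp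

lemma Lf_pCons_smult:
  shows "Lf alpha A B t (pCons 0 (smult c p)) = c * Lf alpha A B t (pCons 0 p)"
  using Lf_smult[of alpha A B t c "pCons 0 p"] by simp

lemma ip_Lf: "ip alpha A B t p q = Lf alpha A B t (p * q)"
  unfolding ip_def Lf_def by simp

definition Dop :: "real \<Rightarrow> real \<Rightarrow> real \<Rightarrow> real \<Rightarrow> real poly \<Rightarrow> real" where
  "Dop alpha A B t p = Lf alpha A B t ([:0,1:] * pderiv p) + (1 + alpha) * Lf alpha A B t p
     - Lf alpha A B t ([:0,1:] * p) + B * t powr (alpha + 1) * exp (- t) * poly p t"

lemma Dop_add:
  assumes "alpha > 0" "t > 0"
  shows "Dop alpha A B t (p + q) = Dop alpha A B t p + Dop alpha A B t q"
  unfolding Dop_def by (simp add: pderiv_add Lf_pCons_add[OF assms] Lf_add[OF assms] algebra_simps)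

lemma Dop_smult:
  shows "Dop alpha A B t (smult c p) = c * Dop alpha A B t p"
  unfolding Dop_def by (simp add: pderiv_smult Lf_smult Lf_pCons_smult algebra_simps)

lemma Dop_monom:
  assumes "alpha > 0" "t > 0"
  shows "Dop alpha A B t (monom 1 k) = 0"
proof -
  have "[:0,1:] * pderiv (monom 1 k) = (monom (of_nat k) k :: real poly)"
    by (rule poly_eqI) (simp add: coeff_xpd coeff_monom)
  moreover have "[:0,1:] * monom 1 k = (monom 1 (Suc k) :: real poly)"
    by (simp add: monom_Suc smult_one)
  ultimately show ?thesis
    unfolding Dop_def by (simp add: Lf_monom mom_rec[OF assms] poly_monom algebra_simps)
qed

lemma Dop_zero:
  assumes "alpha > 0" "t > 0"
  shows "Dop alpha A B t p = 0"
proof -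
  have sm: "Dop alpha A B t (sum f S) = (\<Sum>i\<in>S. Dop alpha A B t (f i))" if "finite S" for f and S :: "nat set"
    using that
  proof (induction S rule: finite_induct)
    case empty
    show ?case using Dop_smult[of alpha A B t 0 0] by simp
  next
    case (insert x F)
    thus ?case by (simp add: Dop_add[OF assms])
  qed
  have "Dop alpha A B t p = Dop alpha A B t (\<Sum>i\<le>degree p. smult (coeff p i) (monom 1 i))"
    by (simp add: smult_monom poly_as_sum_of_monoms)
  also have "\<dots> = 0" by (simp add: sm Dop_smult Dop_monom[OF assms])
  finally show ?thesis .
qed



lemma degree_xpd: "degree ([:0,1:] * pderiv (p :: real poly)) \<le> degree p"
  by (rule degree_le) (auto simp: coeff_xpd coeff_eq_0)

lemma degree_xp: "degree ([:0,1:] * (p :: real poly)) \<le> Suc (degree p)"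
  by (rule degree_le) (auto simp: coeff_eq_0 coeff_pCons split: nat.splits)

lemma deg_cancel:
  fixes p q :: "real poly"
  assumes "degree p \<le> Suc d" "degree q = Suc d" "lead_coeff q = 1"
  shows "degree (p - smult (coeff p (Suc d)) q) \<le> d"
proof (rule degree_le, intro allI impI)
  fix i assume "i > d"
  show "coeff (p - smult (coeff p (Suc d)) q) i = 0"
  proof (cases "i = Suc d")
    case True thus ?thesis using assms by simp
  next
    case False
    hence "i > Suc d" using \<open>i > d\<close> by simp
    thus ?thesis using assms by (simp add: coeff_eq_0)
  qed
qed

lemma ops_deg: "monic_OPS alpha A B t P \<Longrightarrow> degree (P k) = k"
  by (simp add: monic_OPS_def)
lemma ops_lead: "monic_OPS alpha A B t P \<Longrightarrow> lead_coeff (P k) = 1"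
  unfolding monic_OPS_def by blast
lemma ops_orth: "monic_OPS alpha A B t P \<Longrightarrow> m < n \<Longrightarrow> ip alpha A B t (P n) (P m) = 0"
  by (simp add: monic_OPS_def)

lemma ops_P0: "monic_OPS alpha A B t P \<Longrightarrow> P 0 = 1"
proof (rule poly_eqI)
  fix n assume ops: "monic_OPS alpha A B t P"
  show "coeff (P 0) n = coeff 1 n"
  proof (cases n)
    case 0 thus ?thesis using ops_lead[OF ops, of 0] ops_deg[OF ops, of 0] by simp
  next
    case (Suc m) thus ?thesis using ops_deg[OF ops, of 0] by (simp add: coeff_eq_0)
  qed
qed

lemma const_poly: "degree (q::real poly) = 0 \<Longrightarrow> q = smult (coeff q 0) 1"
proof (rule poly_eqI)
  fix n assume "degree q = 0"
  thus "coeff q n = coeff (smult (coeff q 0) 1) n" by (cases n) (auto simp: coeff_eq_0)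
qed

lemma ip_sym: "ip alpha A B t p q = ip alpha A B t q p"
  unfolding ip_Lf by (simp add: mult.commute)

lemma ip_add2:
  assumes "alpha > 0" "t > 0"
  shows "ip alpha A B t p (q + r) = ip alpha A B t p q + ip alpha A B t p r"
  unfolding ip_Lf by (simp add: distrib_left Lf_add[OF assms])

lemma ip_smult2: "ip alpha A B t p (smult c q) = c * ip alpha A B t p q"
  unfolding ip_Lf by (simp add: Lf_smult)

lemma ops_orth_deg:
  assumes ops: "monic_OPS alpha A B t P" and "alpha > 0" "t > 0"
  shows "degree q < n \<Longrightarrow> ip alpha A B t (P n) q = 0"
proof -
  have "\<forall>q. degree q \<le> d \<longrightarrow> d < n \<longrightarrow> ip alpha A B t (P n) q = 0" for d
  proof (induction d)
    case 0
    show ?case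
    proof (intro allI impI)
      fix q :: "real poly" assume "degree q \<le> 0" "0 < n"
      hence qe: "q = smult (coeff q 0) (P 0)" using const_poly[of q] ops_P0[OF ops] by simp
      show "ip alpha A B t (P n) q = 0" using ops_orth[OF ops \<open>0 < n\<close>] by (subst qe) (simp add: ip_smult2)
    qed
  next
    case (Suc d)
    show ?case
    proof (intro allI impI)
      fix q :: "real poly" assume q: "degree q \<le> Suc d" "Suc d < n"
      define c where "c = coeff q (Suc d)"
      have "degree (q - smult c (P (Suc d))) \<le> d"
        unfolding c_def by (rule deg_cancel[OF q(1) ops_deg[OF ops] ops_lead[OF ops]])
      hence "ip alpha A B t (P n) (q - smult c (P (Suc d))) = 0" using Suc.IH q by auto
      moreover have "q = (q - smult c (P (Suc d))) + smult c (P (Suc d))" by simp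
      ultimately show "ip alpha A B t (P n) q = 0"
        using ops_orth[OF ops q(2)] ip_add2[OF assms(2,3), where p="P n" and q="q - smult c (P (Suc d))" and r="smult c (P (Suc d))"] ip_smult2 by simp
    qed
  qed
  thus "degree q < n \<Longrightarrow> ip alpha A B t (P n) q = 0" by auto
qed

lemma ops_proj:
  assumes ops: "monic_OPS alpha A B t P" and "alpha > 0" "t > 0" and r: "degree r \<le> m"
  shows "ip alpha A B t r (P m) = coeff r m * ip alpha A B t (P m) (P m)"
proof (cases m)
  case 0
  hence "r = smult (coeff r m) (P m)" using const_poly[of r] ops_P0[OF ops] r by simp
  hence "ip alpha A B t (P m) r = coeff r m * ip alpha A B t (P m) (P m)"
    using ip_smult2[where p="P m" and c="coeff r m" and q="P m"] by simp
  thus ?thesis by (simp add: ip_sym)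
next
  case (Suc d)
  define c where "c = coeff r m"
  have "degree (r - smult c (P m)) \<le> d"
    unfolding c_def Suc by (rule deg_cancel[OF r[unfolded Suc] ops_deg[OF ops] ops_lead[OF ops]])
  hence z: "ip alpha A B t (P m) (r - smult c (P m)) = 0"
    using ops_orth_deg[OF assms(1-3)] Suc by auto
  have "r = (r - smult c (P m)) + smult c (P m)" by simp
  hence "ip alpha A B t (P m) r = c * ip alpha A B t (P m) (P m)"
    using z ip_add2[OF assms(2,3), where p="P m" and q="r - smult c (P m)" and r="smult c (P m)"] ip_smult2 by simp
  thus ?thesis by (simp add: ip_sym c_def)
qed


lemma Lf_sq_pos:
  assumes a: "alpha > 0" "t > 0" and AB: "A \<ge> 0" "B > 0" and q: "q \<noteq> 0"
  shows "Lf alpha A B t (q * q) > 0"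
proof -
  define f where "f x = indicator {0..} x *\<^sub>R (poly (q * q) x * wgt alpha A B t x)" for x
  have fi: "integrable lborel f" using Lf_int[OF a, of "q*q" A B] unfolding f_def set_integrable_def by simp
  have hv: "A + B * heaviside (x - t) \<ge> 0" for x using AB by (simp add: heaviside_def)
  have fnn: "f x \<ge> 0" for x
    unfolding f_def wgt_def using hv[of x] by (auto simp: indicator_def)
  have Lfe: "Lf alpha A B t (q * q) = integral\<^sup>L lborel f"
    unfolding Lf_def set_lebesgue_integral_def f_def by simp
  have "Lf alpha A B t (q * q) \<noteq> 0"
  proof
    assume "Lf alpha A B t (q * q) = 0"
    hence "AE x in lborel. f x = 0"
      using integral_nonneg_eq_0_iff_AE[OF fi] fnn Lfe by simp
    moreover have "AE x in lborel. x \<notin> {x. poly q x = 0}"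
      by (rule AE_not_in, rule finite_imp_null_set_lborel, rule poly_roots_finite[OF q])
    ultimately have "AE x in lborel. x \<notin> {t<..<t+1}"
    proof eventually_elim
      case (elim x)
      show ?case
      proof
        assume x: "x \<in> {t<..<t+1}"
        hence "x > 0" "x - t > 0" using a by auto
        hence "f x = (poly q x)^2 * (x powr alpha * exp (- x) * (A + B))"
          unfolding f_def wgt_def heaviside_def by (simp add: power2_eq_square)
        moreover have "(poly q x)^2 > 0" using elim(2) by simp
        moreover have "x powr alpha * exp (- x) * (A + B) > 0" using \<open>x > 0\<close> AB by simp
        ultimately have "f x > 0" by simp
        thus False using elim(1) by simp
      qed
    qed
    hence "emeasure lborel {t<..<t+1} = 0"
      by (subst (asm) AE_iff_measurable[of "{t<..<t+1}"]) auto
    thus False by simp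
  qed
  moreover have "Lf alpha A B t (q * q) \<ge> 0" unfolding Lfe using fnn by simp
  ultimately show ?thesis by simp
qed


lemma xmul: "[:0,1:] * (p :: 'a::comm_ring_1 poly) = pCons 0 p"
  by simp

lemma ip_add1:
  assumes "alpha > 0" "t > 0"
  shows "ip alpha A B t (q + r) p = ip alpha A B t q p + ip alpha A B t r p"
  using ip_add2[OF assms, of A B p q r] by (simp add: ip_sym)

lemma ip_smult1: "ip alpha A B t (smult c q) p = c * ip alpha A B t q p"
  using ip_smult2[of alpha A B t p c q] by (simp add: ip_sym)

lemma Dop_expand:
  "Dop alpha A B t p = Lf alpha A B t (pCons 0 (pderiv p)) + (1 + alpha) * Lf alpha A B t p
     - Lf alpha A B t (pCons 0 p) + B * t powr (alpha + 1) * exp (- t) * poly p t"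
  unfolding Dop_def xmul ..

lemma deriv_term:
  assumes ops: "monic_OPS alpha A B t P" and a: "alpha > 0" "t > 0" and n: "n = Suc m"
  shows "ip alpha A B t (pCons 0 (pderiv (P n))) (P m) = - coeff (P n) m * ip alpha A B t (P m) (P m)"
proof -
  define q where "q = pCons 0 (pderiv (P n))"
  have dq: "degree q \<le> Suc m" unfolding q_def using degree_xpd[of "P n"] ops_deg[OF ops, of n] n by (simp add: xmul)
  have cq: "coeff q (Suc m) = real n" unfolding q_def coeff_xpd using ops_lead[OF ops, of n] ops_deg[OF ops, of n] n by simp
  define r where "r = q - smult (coeff q (Suc m)) (P (Suc m))"
  have dr: "degree r \<le> m" unfolding r_def by (rule deg_cancel[OF dq ops_deg[OF ops] ops_lead[OF ops]])
  have "q = r + smult (real n) (P n)" unfolding r_def cq n by simp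
  hence "ip alpha A B t q (P m) = ip alpha A B t r (P m) + real n * ip alpha A B t (P n) (P m)"
    by (simp add: ip_add1[OF a] ip_smult1)
  also have "ip alpha A B t (P n) (P m) = 0" using ops_orth[OF ops] n by simp
  also have "ip alpha A B t r (P m) = coeff r m * ip alpha A B t (P m) (P m)"
    by (rule ops_proj[OF ops a dr])
  also have "coeff r m = - coeff (P n) m"
    unfolding r_def cq unfolding q_def coeff_diff coeff_smult coeff_xpd n by (simp add: algebra_simps)
  finally show ?thesis unfolding q_def by simp
qed

lemma key_n:
  assumes ops: "monic_OPS alpha A B t P" and a: "alpha > 0" "t > 0" and n: "n = Suc m"
  shows "- coeff (P n) m * ip alpha A B t (P m) (P m) - ip alpha A B t (P n) (P n)
      + B * t powr (alpha + 1) * exp (- t) * poly (P n) t * poly (P m) t = 0"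
proof -
  have "Dop alpha A B t (P n * P m) = 0" by (rule Dop_zero[OF a])
  moreover have "pCons 0 (pderiv (P n * P m)) = pCons 0 (pderiv (P n)) * P m + P n * pCons 0 (pderiv (P m))"
    by (simp add: pderiv_mult algebra_simps)
  hence "Lf alpha A B t (pCons 0 (pderiv (P n * P m))) =
     ip alpha A B t (pCons 0 (pderiv (P n))) (P m) + ip alpha A B t (P n) (pCons 0 (pderiv (P m)))"
    by (simp only: Lf_add[OF a] ip_Lf)
  moreover have "ip alpha A B t (P n) (pCons 0 (pderiv (P m))) = 0"
    using ops_orth_deg[OF ops a] degree_xpd[of "P m"] ops_deg[OF ops, of m] n by (simp add: xmul)
  moreover have "Lf alpha A B t (P n * P m) = 0" using ops_orth[OF ops, of m n] n by (simp add: ip_Lf)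
  moreover have "Lf alpha A B t (pCons 0 (P n * P m)) = ip alpha A B t (pCons 0 (P m)) (P n)"
    by (simp add: ip_Lf algebra_simps)
  moreover have "ip alpha A B t (pCons 0 (P m)) (P n) = ip alpha A B t (P n) (P n)"
  proof -
    have "degree (pCons 0 (P m)) \<le> n" using degree_xp[of "P m"] ops_deg[OF ops, of m] n by (simp add: xmul)
    from ops_proj[OF ops a this] show ?thesis
      using ops_lead[OF ops, of m] ops_deg[OF ops, of m] n by simp
  qed
  ultimately show ?thesis
    unfolding Dop_expand using deriv_term[OF ops a n] by (simp add: algebra_simps)
qed


lemma key_j:
  assumes ops: "monic_OPS alpha A B t P" and a: "alpha > 0" "t > 0"
  shows "(2 * real j + 1 + alpha) * ip alpha A B t (P j) (P j) - ip alpha A B t (pCons 0 (P j)) (P j)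
      + B * t powr (alpha + 1) * exp (- t) * (poly (P j) t)^2 = 0"
proof -
  have "Dop alpha A B t (P j * P j) = 0" by (rule Dop_zero[OF a])
  moreover have "pCons 0 (pderiv (P j * P j)) = smult 2 (pCons 0 (pderiv (P j)) * P j)"
  proof -
    have two: "smult 2 q = q + q" for q :: "real poly"
      by (metis one_add_one smult_1_left smult_add_left)
    show ?thesis by (simp only: two) (simp add: pderiv_mult algebra_simps)
  qed
  hence "Lf alpha A B t (pCons 0 (pderiv (P j * P j))) = 2 * ip alpha A B t (pCons 0 (pderiv (P j))) (P j)"
    by (simp only: Lf_smult ip_Lf)
  moreover have "ip alpha A B t (pCons 0 (pderiv (P j))) (P j) = real j * ip alpha A B t (P j) (P j)"
  proof -
    have "degree (pCons 0 (pderiv (P j))) \<le> j" using degree_xpd[of "P j"] ops_deg[OF ops, of j] by (simp add: xmul)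
    from ops_proj[OF ops a this] show ?thesis
      using ops_lead[OF ops, of j] ops_deg[OF ops, of j] by (simp add: coeff_xpd)
  qed
  moreover have "Lf alpha A B t (pCons 0 (P j * P j)) = ip alpha A B t (pCons 0 (P j)) (P j)"
    by (simp add: ip_Lf algebra_simps)
  moreover have "Lf alpha A B t (P j * P j) = ip alpha A B t (P j) (P j)" by (simp add: ip_Lf)
  ultimately show ?thesis
    unfolding Dop_expand by (simp add: algebra_simps power2_eq_square)
qed


lemma sum_odd_alpha: "(\<Sum>j<n. 2 * real j + 1 + alpha) = real n * (real n + alpha)"
  by (induction n) (auto simp: algebra_simps)

theorem theorem2:
  fixes alpha A B t :: real and P :: "nat \<Rightarrow> real poly" and a :: "nat \<Rightarrow> real"
    and h :: "nat \<Rightarrow> real" and R r :: "nat \<Rightarrow> real" and n :: nat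
  assumes "alpha > 0" "A \<ge> 0" "B > 0" "t > 0"
    and "monic_OPS alpha A B t P"
    and h_def: "\<And>k. h k = ip alpha A B t (P k) (P k)"
    and rec0: "[:0, 1:] * P 0 = P 1 + smult (a 0) (P 0)"
    and rec: "\<And>k. k \<ge> 1 \<Longrightarrow>
       [:0, 1:] * P k = P (Suc k) + smult (a k) (P k) + smult (h k / h (k - 1)) (P (k - 1))"
    and R_def: "\<And>k. R k = B * t powr alpha * exp (- t) * (poly (P k) t)^2 / h k"
    and r_def: "\<And>k. r k = B * t powr alpha * exp (- t) * poly (P k) t * poly (P (k - 1)) t / h (k - 1)"
    and "n \<ge> 1"
  shows "t * (\<Sum>j<n. R j) = - t * r n - real n * (real n + alpha) + h n / h (n - 1)
         \<and> (\<Sum>j<n. a j) = - coeff (P n) (n - 1)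
         \<and> - coeff (P n) (n - 1) = h n / h (n - 1) - t * r n"
proof -
  note ops = assms(5)
  have a: "alpha > 0" "t > 0" using assms by auto
  have hpos: "h k > 0" for k
  proof -
    have "P k \<noteq> 0" using ops_lead[OF ops, of k] by auto
    thus ?thesis unfolding h_def ip_Lf using Lf_sq_pos[OF a assms(2,3)] by blast
  qed
  have ipx: "ip alpha A B t (pCons 0 (P j)) (P j) = a j * h j" for j
  proof (cases j)
    case 0
    have "pCons 0 (P 0) = P 1 + smult (a 0) (P 0)" using rec0 by (simp only: xmul)
    hence "ip alpha A B t (pCons 0 (P 0)) (P 0) = ip alpha A B t (P 1) (P 0) + a 0 * h 0"
      by (simp add: ip_add1[OF a] ip_smult1 h_def)
    thus ?thesis using ops_orth[OF ops, of 0 1] 0 by simp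
  next
    case (Suc i)
    have "pCons 0 (P j) = P (Suc j) + smult (a j) (P j) + smult (h j / h i) (P i)"
      using rec[of j] Suc by (simp only: xmul) simp
    hence "ip alpha A B t (pCons 0 (P j)) (P j) = ip alpha A B t (P (Suc j)) (P j) + a j * h j
        + (h j / h i) * ip alpha A B t (P i) (P j)"
      by (simp add: ip_add1[OF a] ip_smult1 h_def)
    moreover have "ip alpha A B t (P i) (P j) = 0" using ops_orth[OF ops, of i j] Suc by (subst ip_sym) simp
    moreover have "ip alpha A B t (P (Suc j)) (P j) = 0" using ops_orth[OF ops, of j "Suc j"] by simp
    ultimately show ?thesis by simp
  qed
  have tpow: "t powr (alpha + 1) = t * t powr alpha" using a by (simp add: powr_add)
  have tR: "t * R j = a j - (2 * real j + 1 + alpha)" for j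
  proof -
    have k: "(2 * real j + 1 + alpha) * h j - a j * h j + B * t powr (alpha + 1) * exp (- t) * (poly (P j) t)^2 = 0"
      using key_j[OF ops a, of j] ipx[of j] h_def[of j] by simp
    have "t * R j = B * t powr (alpha + 1) * exp (- t) * (poly (P j) t)^2 / h j"
      unfolding R_def tpow by simp
    also have "\<dots> = a j - (2 * real j + 1 + alpha)"
      using k hpos[of j] by (simp add: field_simps)
    finally show ?thesis .
  qed
  have sum_a: "m \<ge> 1 \<Longrightarrow> (\<Sum>j<m. a j) = - coeff (P m) (m - 1)" for m
  proof (induction m rule: nat_induct_at_least)
    case base
    have "coeff (pCons 0 (P 0)) 0 = coeff (P 1 + smult (a 0) (P 0)) 0" using rec0 by (simp only: xmul)
    thus ?case using ops_P0[OF ops] by simp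
  next
    case (Suc m)
    have "coeff (pCons 0 (P m)) m = coeff (P (Suc m) + smult (a m) (P m) + smult (h m / h (m - 1)) (P (m - 1))) m"
      using rec[OF Suc.hyps] by (simp only: xmul)
    moreover have "coeff (P (m - 1)) m = 0" using ops_deg[OF ops, of "m - 1"] Suc.hyps by (simp add: coeff_eq_0)
    moreover have "coeff (P m) m = 1" using ops_lead[OF ops, of m] ops_deg[OF ops, of m] by simp
    moreover have "coeff (pCons 0 (P m)) m = coeff (P m) (m - 1)" using Suc.hyps by (cases m) auto
    ultimately show ?case using Suc.IH by simp
  qed
  have key: "- coeff (P n) (n - 1) = h n / h (n - 1) - t * r n"
  proof -
    obtain m where n: "n = Suc m" using assms(11) by (cases n) auto
    have k: "- coeff (P n) m * h m - h n + B * t powr (alpha + 1) * exp (- t) * poly (P n) t * poly (P m) t = 0"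
      using key_n[OF ops a n] h_def by simp
    have "t * r n = B * t powr (alpha + 1) * exp (- t) * poly (P n) t * poly (P m) t / h m"
      unfolding r_def tpow n by simp
    thus ?thesis using k hpos[of m] n by (simp add: field_simps)
  qed
  have "t * (\<Sum>j<n. R j) = (\<Sum>j<n. a j) - (\<Sum>j<n. 2 * real j + 1 + alpha)"
    by (simp add: sum_distrib_left tR sum_subtractf)
  also have "\<dots> = (\<Sum>j<n. a j) - real n * (real n + alpha)" by (simp add: sum_odd_alpha)
  finally have sR: "t * (\<Sum>j<n. R j) = (\<Sum>j<n. a j) - real n * (real n + alpha)" .
  show ?thesis using sR sum_a[OF assms(11)] key by simp
qed

end
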